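(* Let $A$ be a quaternion or octonion division algebra over an arbitrary field $F$, and $f(x)\in A[x]$ of even degree $2n$. Suppose $f(x)$ has $n$ spherical roots from $n$ distinct quadratic-equivalence classes. Then $f(x)=c\,g(x)$ for some $c\in A$ and $g(x)\in F[x]$.
   Context: For an $F$-algebra $B$ with involution and $\gamma\in F^\times$, the Cayley--Dickson double $B\{\gamma\}$ is $B\times B$ with componentwise linear operations, product $(a,b)(c,d)=(ac+\gamma\bar d b,\ da+b\bar c)$ and involution $\overline{(a,b)}=(\bar a,-b)$. Cayley--Dickson algebras over $F$: $A_1=F[\ell_1:\ell_1^2=\ell_1+\mu]$ with $\mu\in F$, $4\mu+1\neq0$, involution $\overline{\alpha+\beta\ell_1}=(\alpha+\beta)-\beta\ell_1$, and $A_{k+1}=A_k\{\gamma_k\}$, $\gamma_k\in F^\times$. Quaternion algebras are the $A_2$, octonion algebras the $A_3$; division means the norm is anisotropic. Trace $\mathrm{tr}(\lambda)=\lambda+\bar\lambda\in F$, norm $\mathrm{n}(\lambda)=\bar\lambda\lambda\in F$, characteristic polynomial $p_\lambda(x)=x^2-\mathrm{tr}(\lambda)x+\mathrm{n}(\lambda)$. $A[x]=A\otimes_F F[x]$ with central $x$; $f(x)=a_mx^m+\dots+a_0$; substitution $f(r)=\sum_k a_k(r^k)$; $c\,g(x)$ means multiplying each coefficient of $g$ by $c$ on the left. A root $\lambda\in A\setminus F$ of $f$ is spherical if every $r\in A$ with $p_\lambda(r)=0$ is a root of $f$. Elements are quadratically-equivalent if they have the same trace and norm. *)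

theory Defs
  imports "HOL-Computational_Algebra.Polynomial"
begin

(* Cayley--Dickson algebras over a field 'f, elements represented as coefficient lists.
   Level A_1 = F[l : l^2 = l + mu]: element [a0, a1] stands for a0 + a1*l.
   Level A_{k+1} = A_k{gamma_k}: element of A_{k+1} is the concatenation a @ b of the
   pair (a,b) of elements of A_k.
   The parameter list gs lists the doubling constants OUTERMOST FIRST:
   gs = [gamma_k, ..., gamma_1] describes A_{k+1} = (...(A_1{gamma_1})...){gamma_k}. *)

definition vadd :: "'f::field list \<Rightarrow> 'f list \<Rightarrow> 'f list" where
  "vadd x y = map2 (+) x y"

definition vsub :: "'f::field list \<Rightarrow> 'f list \<Rightarrow> 'f list" where
  "vsub x y = map2 (-) x y"

fun cd_conj :: "'f::field list \<Rightarrow> 'f list \<Rightarrow> 'f list" where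
  "cd_conj [] x = [x!0 + x!1, - (x!1)]"
| "cd_conj (g#gs) x =
     (let h = length x div 2 in cd_conj gs (take h x) @ map uminus (drop h x))"

fun cd_mul :: "'f::field \<Rightarrow> 'f list \<Rightarrow> 'f list \<Rightarrow> 'f list \<Rightarrow> 'f list" where
  "cd_mul mu [] x y = [x!0 * y!0 + mu * (x!1 * y!1), x!0 * y!1 + x!1 * y!0 + x!1 * y!1]"
| "cd_mul mu (g#gs) x y =
     (let h = length x div 2; a = take h x; b = drop h x; c = take h y; d = drop h y in
       vadd (cd_mul mu gs a c) (map ((*) g) (cd_mul mu gs (cd_conj gs d) b))
       @ vadd (cd_mul mu gs d a) (cd_mul mu gs b (cd_conj gs c)))"

definition cd_dim :: "'f list \<Rightarrow> nat" where
  "cd_dim gs = 2 ^ Suc (length gs)"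

definition cd_carrier :: "'f list \<Rightarrow> 'f list set" where
  "cd_carrier gs = {x. length x = cd_dim gs}"

definition cd_scal :: "'f list \<Rightarrow> 'f::field \<Rightarrow> 'f list" where
  "cd_scal gs a = a # replicate (cd_dim gs - 1) 0"

definition cd_zero :: "'f::field list \<Rightarrow> 'f list" where
  "cd_zero gs = cd_scal gs 0"

definition cd_in_F :: "'f::field list \<Rightarrow> 'f list \<Rightarrow> bool" where
  "cd_in_F gs x = (\<exists>a. x = cd_scal gs a)"

fun cd_pow :: "'f::field \<Rightarrow> 'f list \<Rightarrow> 'f list \<Rightarrow> nat \<Rightarrow> 'f list" where
  "cd_pow mu gs r 0 = cd_scal gs 1"
| "cd_pow mu gs r (Suc k) = cd_mul mu gs r (cd_pow mu gs r k)"

definition cd_tr :: "'f::field list \<Rightarrow> 'f list \<Rightarrow> 'f list" where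
  "cd_tr gs x = vadd x (cd_conj gs x)"

definition cd_norm :: "'f::field \<Rightarrow> 'f list \<Rightarrow> 'f list \<Rightarrow> 'f list" where
  "cd_norm mu gs x = cd_mul mu gs (cd_conj gs x) x"

definition cd_division :: "'f::field \<Rightarrow> 'f list \<Rightarrow> bool" where
  "cd_division mu gs = (\<forall>x\<in>cd_carrier gs. cd_norm mu gs x = cd_zero gs \<longrightarrow> x = cd_zero gs)"

definition cd_params_ok :: "'f::field \<Rightarrow> 'f list \<Rightarrow> bool" where
  "cd_params_ok mu gs = (4 * mu + 1 \<noteq> 0 \<and> (\<forall>g\<in>set gs. g \<noteq> 0))"

text \<open>Polynomials in A[x] as coefficient lists fs (fs!k is the coefficient of x^k).
  Substitution f(r) = sum_k a_k (r^k).\<close>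
definition cd_pcoeff :: "'f::field list \<Rightarrow> 'f list list \<Rightarrow> nat \<Rightarrow> 'f list" where
  "cd_pcoeff gs fs k = (if k < length fs then fs ! k else cd_zero gs)"

definition cd_eval :: "'f::field \<Rightarrow> 'f list \<Rightarrow> 'f list list \<Rightarrow> 'f list \<Rightarrow> 'f list" where
  "cd_eval mu gs fs r =
     foldr vadd (map (\<lambda>k. cd_mul mu gs (fs ! k) (cd_pow mu gs r k)) [0..<length fs]) (cd_zero gs)"

definition cd_charpoly_eval :: "'f::field \<Rightarrow> 'f list \<Rightarrow> 'f list \<Rightarrow> 'f list \<Rightarrow> 'f list" where
  "cd_charpoly_eval mu gs lam r =
     vadd (vsub (cd_pow mu gs r 2) (cd_mul mu gs (cd_tr gs lam) r)) (cd_norm mu gs lam)"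

definition cd_spherical_root :: "'f::field \<Rightarrow> 'f list \<Rightarrow> 'f list list \<Rightarrow> 'f list \<Rightarrow> bool" where
  "cd_spherical_root mu gs fs lam =
     (lam \<in> cd_carrier gs \<and> \<not> cd_in_F gs lam \<and> cd_eval mu gs fs lam = cd_zero gs \<and>
      (\<forall>r\<in>cd_carrier gs. cd_charpoly_eval mu gs lam r = cd_zero gs \<longrightarrow> cd_eval mu gs fs r = cd_zero gs))"

definition cd_quad_equiv :: "'f::field \<Rightarrow> 'f list \<Rightarrow> 'f list \<Rightarrow> 'f list \<Rightarrow> bool" where
  "cd_quad_equiv mu gs x y = (cd_tr gs x = cd_tr gs y \<and> cd_norm mu gs x = cd_norm mu gs y)"

end

theory Submission
  imports Defs
begin


definition smul :: "'f::field \<Rightarrow> 'f list \<Rightarrow> 'f list" where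
  "smul c x = map ((*) c) x"

lemma mulQ: "cd_mul mu [g] [x0,x1,x2,x3] [y0,y1,y2,y3] = [(-g*mu*x3*y3 + g*x2*y2 + g*x2*y3 + mu*x1*y1 + x0*y0), (-g*x2*y3 + g*x3*y2 + x0*y1 + x1*y0 + x1*y1), (mu*x1*y3 - mu*x3*y1 + x0*y2 + x2*y0 + x2*y1), (x0*y3 + x1*y2 + x1*y3 - x2*y1 + x3*y0)]"
  by (simp add: vadd_def Let_def) (simp add: algebra_simps)
lemma conjQ: "cd_conj [g] [x0,x1,x2,x3] = [(x0 + x1), (-x1), (-x2), (-x3)]"
  by (simp add: vadd_def Let_def)
lemma mulO: "cd_mul mu [g2,g1] [x0,x1,x2,x3,x4,x5,x6,x7] [y0,y1,y2,y3,y4,y5,y6,y7] = [(g1*g2*mu*x7*y7 - g1*g2*x6*y6 - g1*g2*x7*y6 - g1*mu*x3*y3 + g1*x2*y2 + g1*x2*y3 - g2*mu*x5*y5 + g2*x4*y4 + g2*x4*y5 + mu*x1*y1 + x0*y0), (-g1*g2*x6*y7 + g1*g2*x7*y6 - g1*x2*y3 + g1*x3*y2 - g2*x4*y5 + g2*x5*y4 + x0*y1 + x1*y0 + x1*y1), (g2*mu*x5*y7 - g2*mu*x7*y5 - g2*x4*y6 - g2*x5*y6 + g2*x6*y4 + g2*x6*y5 + mu*x1*y3 - mu*x3*y1 + x0*y2 + x2*y0 + x2*y1), (-g2*x4*y7 + g2*x5*y6 - g2*x6*y5 + g2*x7*y4 + x0*y3 + x1*y2 + x1*y3 - x2*y1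 + x3*y0), (-g1*mu*x3*y7 + g1*mu*x7*y3 + g1*x2*y6 + g1*x3*y6 - g1*x6*y2 - g1*x6*y3 + mu*x1*y5 - mu*x5*y1 + x0*y4 + x4*y0 + x4*y1), (g1*x2*y7 - g1*x3*y6 + g1*x6*y3 - g1*x7*y2 + x0*y5 + x1*y4 + x1*y5 - x4*y1 + x5*y0), (-mu*x1*y7 + mu*x3*y5 - mu*x5*y3 + mu*x7*y1 + x0*y6 + x1*y6 + x2*y4 - x4*y2 + x6*y0), (x0*y7 - x1*y6 + x2*y5 + x3*y4 + x3*y5 - x4*y3 - x5*y2 - x5*y3 + x6*y1 + x7*y0 + x7*y1)]"
  by (simp add: vadd_def Let_def) (simp add: algebra_simps)
lemma conjO: "cd_conj [g2,g1] [x0,x1,x2,x3,x4,x5,x6,x7] = [(x0 + x1), (-x1), (-x2), (-x3), (-x4), (-x5), (-x6), (-x7)]"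
  by (simp add: vadd_def Let_def)

lemma len4: "length x = 4 \<Longrightarrow> \<exists>a b c d. x = [a,b,c,d]"
  by (simp add: numeral_eq_Suc length_Suc_conv) blast
lemma len8: "length x = 8 \<Longrightarrow> \<exists>a b c d e f g h. x = [a,b,c,d,e,f,g,h]"
  by (simp add: numeral_eq_Suc length_Suc_conv) blast

lemma gs_cases:
  assumes "length gs = 1 \<or> length gs = 2"
  obtains g where "gs = [g]" | g2 g1 where "gs = [g2, g1]"
  using assms by (auto simp: numeral_eq_Suc length_Suc_conv)

lemma carr_q: "x \<in> cd_carrier [g] \<Longrightarrow> \<exists>a b c d. x = [a,b,c,d]"
  by (simp add: cd_carrier_def cd_dim_def len4)
lemma carr_o: "x \<in> cd_carrier [g2,g1] \<Longrightarrow> \<exists>a b c d e f g h. x = [a,b,c,d,e,f,g,h]"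
  by (simp add: cd_carrier_def cd_dim_def len8)

lemmas fsimps = mulQ conjQ mulO conjO vadd_def vsub_def smul_def cd_scal_def cd_dim_def cd_carrier_def cd_norm_def cd_tr_def

lemma conj_closed:
  assumes "length gs = 1 \<or> length gs = 2" "x \<in> cd_carrier gs"
  shows "cd_conj gs x \<in> cd_carrier gs"
  using assms(1) proof (cases rule: gs_cases)
  case 1 then show ?thesis using carr_q[of x] assms by (auto simp del: cd_mul.simps cd_conj.simps simp: fsimps)
next
  case 2 then show ?thesis using carr_o[of x] assms by (auto simp del: cd_mul.simps cd_conj.simps simp: fsimps)
qed

lemma mul_closed:
  assumes "length gs = 1 \<or> length gs = 2" "x \<in> cd_carrier gs" "y \<in> cd_carrier gs"
  shows "cd_mul mu gs x y \<in> cd_carrier gs"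
  using assms(1) proof (cases rule: gs_cases)
  case 1 then show ?thesis using carr_q[of x] carr_q[of y] assms by (auto simp del: cd_mul.simps cd_conj.simps simp: fsimps)
next
  case 2 then show ?thesis using carr_o[of x] carr_o[of y] assms by (auto simp del: cd_mul.simps cd_conj.simps simp: fsimps)
qed

lemma mul_add_l:
  assumes "length gs = 1 \<or> length gs = 2" "x \<in> cd_carrier gs" "y \<in> cd_carrier gs" "z \<in> cd_carrier gs"
  shows "cd_mul mu gs (vadd x y) z = vadd (cd_mul mu gs x z) (cd_mul mu gs y z)"
  using assms(1) proof (cases rule: gs_cases)
  case 1 then show ?thesis using carr_q[of x] carr_q[of y] carr_q[of z] assms by (auto simp del: cd_mul.simps cd_conj.simps simp: fsimps algebra_simps)
next
  case 2 then show ?thesis using carr_o[of x] carr_o[of y] carr_o[of z] assms by (auto simp del: cd_mul.simps cd_conj.simps simp: fsimps algebra_simps)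
qed

lemma mul_add_r:
  assumes "length gs = 1 \<or> length gs = 2" "x \<in> cd_carrier gs" "y \<in> cd_carrier gs" "z \<in> cd_carrier gs"
  shows "cd_mul mu gs x (vadd y z) = vadd (cd_mul mu gs x y) (cd_mul mu gs x z)"
  using assms(1) proof (cases rule: gs_cases)
  case 1 then show ?thesis using carr_q[of x] carr_q[of y] carr_q[of z] assms by (auto simp del: cd_mul.simps cd_conj.simps simp: fsimps algebra_simps)
next
  case 2 then show ?thesis using carr_o[of x] carr_o[of y] carr_o[of z] assms by (auto simp del: cd_mul.simps cd_conj.simps simp: fsimps algebra_simps)
qed

lemma mul_smul_l:
  assumes "length gs = 1 \<or> length gs = 2" "x \<in> cd_carrier gs" "y \<in> cd_carrier gs"
  shows "cd_mul mu gs (smul c x) y = smul c (cd_mul mu gs x y)"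
  using assms(1) proof (cases rule: gs_cases)
  case 1 then show ?thesis using carr_q[of x] carr_q[of y] assms by (auto simp del: cd_mul.simps cd_conj.simps simp: fsimps algebra_simps)
next
  case 2 then show ?thesis using carr_o[of x] carr_o[of y] assms by (auto simp del: cd_mul.simps cd_conj.simps simp: fsimps algebra_simps)
qed

lemma mul_smul_r:
  assumes "length gs = 1 \<or> length gs = 2" "x \<in> cd_carrier gs" "y \<in> cd_carrier gs"
  shows "cd_mul mu gs x (smul c y) = smul c (cd_mul mu gs x y)"
  using assms(1) proof (cases rule: gs_cases)
  case 1 then show ?thesis using carr_q[of x] carr_q[of y] assms by (auto simp del: cd_mul.simps cd_conj.simps simp: fsimps algebra_simps)
next
  case 2 then show ?thesis using carr_o[of x] carr_o[of y] assms by (auto simp del: cd_mul.simps cd_conj.simps simp: fsimps algebra_simps)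
qed

lemma mul_scal_r:
  assumes "length gs = 1 \<or> length gs = 2" "x \<in> cd_carrier gs"
  shows "cd_mul mu gs x (cd_scal gs a) = smul a x"
  using assms(1) proof (cases rule: gs_cases)
  case 1 then show ?thesis using carr_q[of x] assms by (auto simp del: cd_mul.simps cd_conj.simps simp: fsimps algebra_simps numeral_eq_Suc)
next
  case 2 then show ?thesis using carr_o[of x] assms by (auto simp del: cd_mul.simps cd_conj.simps simp: fsimps algebra_simps numeral_eq_Suc)
qed

lemma mul_scal_l:
  assumes "length gs = 1 \<or> length gs = 2" "x \<in> cd_carrier gs"
  shows "cd_mul mu gs (cd_scal gs a) x = smul a x"
  using assms(1) proof (cases rule: gs_cases)
  case 1 then show ?thesis using carr_q[of x] assms by (auto simp del: cd_mul.simps cd_conj.simps simp: fsimps algebra_simps numeral_eq_Suc)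
next
  case 2 then show ?thesis using carr_o[of x] assms by (auto simp del: cd_mul.simps cd_conj.simps simp: fsimps algebra_simps numeral_eq_Suc)
qed

lemma tr_scal:
  assumes "length gs = 1 \<or> length gs = 2" "x \<in> cd_carrier gs"
  shows "cd_tr gs x = cd_scal gs (cd_tr gs x ! 0)"
  using assms(1) proof (cases rule: gs_cases)
  case 1 then show ?thesis using carr_q[of x] assms by (auto simp del: cd_mul.simps cd_conj.simps simp: fsimps algebra_simps numeral_eq_Suc)
next
  case 2 then show ?thesis using carr_o[of x] assms by (auto simp del: cd_mul.simps cd_conj.simps simp: fsimps algebra_simps numeral_eq_Suc)
qed

lemma norm_scal:
  assumes "length gs = 1 \<or> length gs = 2" "x \<in> cd_carrier gs"
  shows "cd_norm mu gs x = cd_scal gs (cd_norm mu gs x ! 0)"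
  using assms(1) proof (cases rule: gs_cases)
  case 1 then show ?thesis using carr_q[of x] assms by (auto simp del: cd_mul.simps cd_conj.simps simp: fsimps algebra_simps numeral_eq_Suc)
next
  case 2 then show ?thesis using carr_o[of x] assms by (auto simp del: cd_mul.simps cd_conj.simps simp: fsimps algebra_simps numeral_eq_Suc)
qed

lemma mul_conj_right:
  assumes "length gs = 1 \<or> length gs = 2" "x \<in> cd_carrier gs" "y \<in> cd_carrier gs"
  shows "cd_mul mu gs (cd_mul mu gs x y) (cd_conj gs y) = smul (cd_norm mu gs y ! 0) x"
  using assms(1) proof (cases rule: gs_cases)
  case 1 then show ?thesis using carr_q[of x] carr_q[of y] assms by (auto simp del: cd_mul.simps cd_conj.simps simp: fsimps algebra_simps)
next
  case 2 then show ?thesis using carr_o[of x] carr_o[of y] assms by (auto simp del: cd_mul.simps cd_conj.simps simp: fsimps algebra_simps)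
qed



lemma A1_fix:
  fixes mu :: "'f::field"
  assumes mu: "mu \<noteq> 0" and p: "4*mu+1 \<noteq> 0" and h1: "x3 - x2*(1+mu)/mu = x2" and h2: "x2/mu - x3 = x3"
  shows "x2 = 0 \<and> x3 = 0"
proof -
  have e2: "x2 = 2*mu*x3" using h2 mu by (simp add: field_simps)
  have e1: "mu*x3 - x2*(1+mu) = mu*x2" using h1 mu by (simp add: field_simps)
  have "mu*x3*(4*mu+1) = 0" using e1 e2 by algebra
  then have "x3 = 0" using mu p by simp
  then show ?thesis using e2 by simp
qed

lemma A1_fix2:
  fixes mu :: "'f::field"
  assumes mu: "mu \<noteq> 0" and p: "4*mu+1 \<noteq> 0" and h1: "- x6 - x7 = x6" and h2: "-x6/mu - x7 - x7/mu = x7"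
  shows "x6 = 0 \<and> x7 = 0"
proof -
  have e1: "x7 = -2*x6" using h1 by (simp add: algebra_simps add_eq_0_iff2)
  have e2: "-x6 - mu*x7 - x7 = mu*x7"
  proof -
    have "mu*(-x6/mu - x7 - x7/mu) = mu*x7" using h2 by simp
    thus ?thesis using mu by (simp add: algebra_simps)
  qed
  have "x6*(4*mu+1) = 0" using e1 e2 by algebra
  then have "x6 = 0" using mu p by simp
  then show ?thesis using e1 by simp
qed


lemma exQ:
  fixes mu :: "'f::field"
  assumes mu: "mu \<noteq> 0" and p: "4*mu+1 \<noteq> 0" and nf: "\<not> (x1 = 0 \<and> x2 = 0 \<and> x3 = 0)"
  shows "\<exists>r. r \<in> cd_carrier [g] \<and> r \<noteq> [x0,x1,x2,x3] \<and> cd_tr [g] r ! 0 = cd_tr [g] [x0,x1,x2,x3] ! 0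
     \<and> cd_norm mu [g] r ! 0 = cd_norm mu [g] [x0,x1,x2,x3] ! 0"
proof (cases "x2 = 0 \<and> x3 = 0")
  case True
  then have "x1 \<noteq> 0" using nf by simp
  then show ?thesis using True
    by (intro exI[of _ "[x0+x1, -x1, 0, 0]"]) (simp del: cd_mul.simps cd_conj.simps add: fsimps algebra_simps)
next
  case False
  show ?thesis
  proof (intro exI[of _ "[x0, x1, x3 - x2*(1+mu)/mu, x2/mu - x3]"] conjI)
    show "[x0, x1, x3 - x2*(1+mu)/mu, x2/mu - x3] \<noteq> [x0,x1,x2,x3]"
      using A1_fix[OF mu p, of x3 x2] False by auto
    show "cd_norm mu [g] [x0, x1, x3 - x2 * (1 + mu) / mu, x2 / mu - x3] ! 0 = cd_norm mu [g] [x0, x1, x2, x3] ! 0"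
      using mu by (simp del: cd_mul.simps cd_conj.simps add: fsimps) (simp add: field_simps)
  qed (simp_all del: cd_mul.simps cd_conj.simps add: fsimps)
qed

lemma exO:
  fixes mu :: "'f::field"
  assumes mu: "mu \<noteq> 0" and p: "4*mu+1 \<noteq> 0" and nf: "\<not> (x1 = 0 \<and> x2 = 0 \<and> x3 = 0 \<and> x4 = 0 \<and> x5 = 0 \<and> x6 = 0 \<and> x7 = 0)"
  shows "\<exists>r. r \<in> cd_carrier [g2,g1] \<and> r \<noteq> [x0,x1,x2,x3,x4,x5,x6,x7] \<and> cd_tr [g2,g1] r ! 0 = cd_tr [g2,g1] [x0,x1,x2,x3,x4,x5,x6,x7] ! 0
     \<and> cd_norm mu [g2,g1] r ! 0 = cd_norm mu [g2,g1] [x0,x1,x2,x3,x4,x5,x6,x7] ! 0"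
proof (cases "x4 = 0 \<and> x5 = 0 \<and> x6 = 0 \<and> x7 = 0")
  case T1: True
  show ?thesis
  proof (cases "x2 = 0 \<and> x3 = 0")
    case True
    then have "x1 \<noteq> 0" using nf T1 by simp
    then show ?thesis using True T1
      by (intro exI[of _ "[x0+x1, -x1, 0, 0, 0, 0, 0, 0]"]) (simp del: cd_mul.simps cd_conj.simps add: fsimps algebra_simps)
  next
    case False
    show ?thesis
    proof (intro exI[of _ "[x0, x1, x3 - x2*(1+mu)/mu, x2/mu - x3, 0, 0, 0, 0]"] conjI)
      show "[x0, x1, x3 - x2*(1+mu)/mu, x2/mu - x3, 0, 0, 0, 0] \<noteq> [x0,x1,x2,x3,x4,x5,x6,x7]"
        using A1_fix[OF mu p, of x3 x2] False by auto
      show "cd_norm mu [g2,g1] [x0, x1, x3 - x2 * (1 + mu) / mu, x2 / mu - x3, 0, 0, 0, 0] ! 0 = cd_norm mu [g2,g1] [x0,x1,x2,x3,x4,x5,x6,x7] ! 0"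
        using mu T1 by (simp del: cd_mul.simps cd_conj.simps add: fsimps) (simp add: field_simps)
    qed (use T1 in \<open>simp_all del: cd_mul.simps cd_conj.simps add: fsimps\<close>)
  qed
next
  case False
  let ?r = "[x0, x1, x2, x3, x5 - x4*(1+mu)/mu, x4/mu - x5, -x6 - x7, -x6/mu - x7 - x7/mu]"
  show ?thesis
  proof (intro exI[of _ ?r] conjI)
    show "?r \<noteq> [x0,x1,x2,x3,x4,x5,x6,x7]"
      using A1_fix[OF mu p, of x5 x4] A1_fix2[OF mu p, of x6 x7] False by auto
    show "cd_norm mu [g2,g1] ?r ! 0 = cd_norm mu [g2,g1] [x0,x1,x2,x3,x4,x5,x6,x7] ! 0"
      using mu by (simp del: cd_mul.simps cd_conj.simps add: fsimps) (simp add: field_simps)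
  qed (simp_all del: cd_mul.simps cd_conj.simps add: fsimps)
qed


lemma rep3: "replicate 3 x = [x,x,x]" by (simp add: numeral_3_eq_3)
lemma rep7: "replicate 7 x = [x,x,x,x,x,x,x]" by (simp add: numeral_eq_Suc)
lemma T1: "x \<in> cd_carrier [g] \<Longrightarrow> \<not> cd_in_F [g] x \<Longrightarrow> \<exists>x0 x1 x2 x3. x = [x0,x1,x2,x3] \<and> \<not>(x1 = 0 \<and> x2 = 0 \<and> x3 = 0)"
  apply (drule carr_q)
  apply (elim exE)
  apply (simp add: cd_in_F_def cd_scal_def cd_dim_def rep3)
  done
lemma T2: "x \<in> cd_carrier [g2,g1] \<Longrightarrow> \<not> cd_in_F [g2,g1] x \<Longrightarrow> \<exists>x0 x1 x2 x3 x4 x5 x6 x7. x = [x0,x1,x2,x3,x4,x5,x6,x7] \<and> \<not>(x1 = 0 \<and> x2 = 0 \<and> x3 = 0 \<and> x4 = 0 \<and> x5 = 0 \<and> x6 = 0 \<and> x7 = 0)"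
  apply (drule carr_o)
  apply (elim exE)
  apply (simp add: cd_in_F_def cd_scal_def cd_dim_def rep7)
  done

lemma mu_nz:
  assumes Q: "length gs = 1 \<or> length gs = 2" and dv: "cd_division mu gs"
  shows "mu \<noteq> 0"
proof
  assume m0: "mu = 0"
  show False using Q
  proof (cases rule: gs_cases)
    case 1
    have "cd_norm mu gs [0,1,0,0] = cd_zero gs" "[0,1,0,0] \<in> cd_carrier gs"
      by (simp_all del: cd_mul.simps cd_conj.simps add: 1 fsimps cd_zero_def m0 rep3)
    then have "[0,1,0,0] = cd_zero gs" using dv unfolding cd_division_def by blast
    then show False by (simp add: 1 cd_zero_def cd_scal_def cd_dim_def rep3)
  next
    case 2
    have "cd_norm mu gs [0,1,0,0,0,0,0,0] = cd_zero gs" "[0,1,0,0,0,0,0,0] \<in> cd_carrier gs"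
      by (simp_all del: cd_mul.simps cd_conj.simps add: 2 fsimps cd_zero_def m0 rep7)
    then have "[0,1,0,0,0,0,0,0] = cd_zero gs" using dv unfolding cd_division_def by blast
    then show False by (simp add: 2 cd_zero_def cd_scal_def cd_dim_def rep7)
  qed
qed

lemma exists_other0:
  assumes Q: "length gs = 1 \<or> length gs = 2" and mu: "mu \<noteq> 0" and p: "4*mu+1 \<noteq> 0"
    and x: "x \<in> cd_carrier gs" and nf: "\<not> cd_in_F gs x"
  shows "\<exists>r. r \<in> cd_carrier gs \<and> r \<noteq> x \<and> cd_tr gs r ! 0 = cd_tr gs x ! 0 \<and> cd_norm mu gs r ! 0 = cd_norm mu gs x ! 0"
  using Q
proof (cases rule: gs_cases)
  case (1 g)
  obtain x0 x1 x2 x3 where xe: "x = [x0,x1,x2,x3]" and nz: "\<not>(x1 = 0 \<and> x2 = 0 \<and> x3 = 0)"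
    using T1[of x g] x nf unfolding 1 by blast
  show ?thesis unfolding 1 xe by (rule exQ[OF mu p nz])
next
  case (2 g2 g1)
  obtain x0 x1 x2 x3 x4 x5 x6 x7 where xe: "x = [x0,x1,x2,x3,x4,x5,x6,x7]"
    and nz: "\<not>(x1 = 0 \<and> x2 = 0 \<and> x3 = 0 \<and> x4 = 0 \<and> x5 = 0 \<and> x6 = 0 \<and> x7 = 0)"
    using T2[of x g2 g1] x nf unfolding 2 by blast
  show ?thesis unfolding 2 xe by (rule exO[OF mu p nz])
qed

lemma exists_other:
  assumes Q: "length gs = 1 \<or> length gs = 2" and po: "cd_params_ok mu gs" and dv: "cd_division mu gs"
    and x: "x \<in> cd_carrier gs" and nf: "\<not> cd_in_F gs x"
  shows "\<exists>r\<in>cd_carrier gs. r \<noteq> x \<and> cd_tr gs r = cd_tr gs x \<and> cd_norm mu gs r = cd_norm mu gs x"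
proof -
  have mu: "mu \<noteq> 0" using mu_nz[OF Q dv] .
  have p: "4*mu+1 \<noteq> 0" using po by (simp add: cd_params_ok_def)
  obtain r where r: "r \<in> cd_carrier gs" "r \<noteq> x" "cd_tr gs r ! 0 = cd_tr gs x ! 0"
     "cd_norm mu gs r ! 0 = cd_norm mu gs x ! 0" using exists_other0[OF Q mu p x nf] by blast
  have "cd_tr gs r = cd_tr gs x" using tr_scal[OF Q r(1)] tr_scal[OF Q x] r(3) by metis
  moreover have "cd_norm mu gs r = cd_norm mu gs x" using norm_scal[OF Q r(1)] norm_scal[OF Q x] r(4) by metis
  ultimately show ?thesis using r by blast
qed



abbreviation (input) QQ :: "'f list \<Rightarrow> bool" where "QQ gs \<equiv> length gs = 1 \<or> length gs = 2"

lemma dim_pos: "cd_dim gs > 0" by (simp add: cd_dim_def)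

lemma vadd_C: "x \<in> cd_carrier gs \<Longrightarrow> y \<in> cd_carrier gs \<Longrightarrow> vadd x y \<in> cd_carrier gs"
  by (simp add: vadd_def cd_carrier_def)
lemma vsub_C: "x \<in> cd_carrier gs \<Longrightarrow> y \<in> cd_carrier gs \<Longrightarrow> vsub x y \<in> cd_carrier gs"
  by (simp add: vsub_def cd_carrier_def)
lemma smul_C: "x \<in> cd_carrier gs \<Longrightarrow> smul c x \<in> cd_carrier gs"
  by (simp add: smul_def cd_carrier_def)
lemma scal_C: "cd_scal gs a \<in> cd_carrier gs"
  using dim_pos[of gs] by (simp add: cd_scal_def cd_carrier_def)
lemma zero_C: "cd_zero gs \<in> cd_carrier gs"
  by (simp add: cd_zero_def scal_C)

lemma nth_vadd: "j < length x \<Longrightarrow> j < length y \<Longrightarrow> vadd x y ! j = x ! j + y ! j"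
  by (simp add: vadd_def)
lemma nth_vsub: "j < length x \<Longrightarrow> j < length y \<Longrightarrow> vsub x y ! j = x ! j - y ! j"
  by (simp add: vsub_def)
lemma nth_smul: "j < length x \<Longrightarrow> smul c x ! j = c * x ! j"
  by (simp add: smul_def)
lemma nth_scal: "j < cd_dim gs \<Longrightarrow> cd_scal gs a ! j = (if j = 0 then a else 0)"
  by (cases j) (simp_all add: cd_scal_def)
lemma nth_zero: "j < cd_dim gs \<Longrightarrow> cd_zero gs ! j = 0"
  by (simp add: cd_zero_def nth_scal)
lemma len_vadd: "length (vadd x y) = min (length x) (length y)" by (simp add: vadd_def)
lemma len_vsub: "length (vsub x y) = min (length x) (length y)" by (simp add: vsub_def)
lemma len_smul: "length (smul c x) = length x" by (simp add: smul_def)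
lemma len_scal: "length (cd_scal gs a) = cd_dim gs" using dim_pos[of gs] by (simp add: cd_scal_def)
lemma len_zero: "length (cd_zero gs) = cd_dim gs" by (simp add: cd_zero_def len_scal)
lemma len_mul: "QQ gs \<Longrightarrow> length x = cd_dim gs \<Longrightarrow> length y = cd_dim gs \<Longrightarrow> length (cd_mul mu gs x y) = cd_dim gs"
  using mul_closed[of gs x y mu] by (simp add: cd_carrier_def)
lemma len_conj: "QQ gs \<Longrightarrow> length x = cd_dim gs \<Longrightarrow> length (cd_conj gs x) = cd_dim gs"
  using conj_closed[of gs x] by (simp add: cd_carrier_def)
lemma len_C: "x \<in> cd_carrier gs \<Longrightarrow> length x = cd_dim gs" by (simp add: cd_carrier_def)

lemma C_eqI: "length x = cd_dim gs \<Longrightarrow> length y = cd_dim gs \<Longrightarrow> (\<And>j. j < cd_dim gs \<Longrightarrow> x ! j = y ! j) \<Longrightarrow> x = y"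
  by (rule nth_equalityI) simp_all

lemmas vC = vadd_C vsub_C smul_C scal_C zero_C
lemmas vnth = nth_vadd nth_vsub nth_smul nth_scal nth_zero len_vadd len_vsub len_smul len_scal len_zero

lemma smul_1: "smul 1 x = x" by (induct x) (simp_all add: smul_def)

lemma pow2: "QQ gs \<Longrightarrow> r \<in> cd_carrier gs \<Longrightarrow> cd_pow mu gs r 2 = cd_mul mu gs r r"
  by (simp add: numeral_2_eq_2 mul_scal_r smul_1)

lemma mul_zero_l: "QQ gs \<Longrightarrow> r \<in> cd_carrier gs \<Longrightarrow> cd_mul mu gs (cd_zero gs) r = cd_zero gs"
  unfolding cd_zero_def using mul_scal_l[of gs r mu 0]
  by (auto intro!: C_eqI[where gs=gs] simp: vnth len_C)

lemma quad_id:
  assumes Q: "QQ gs" and r: "r \<in> cd_carrier gs"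
  shows "cd_charpoly_eval mu gs r r = cd_zero gs"
proof -
  have e: "cd_mul mu gs (cd_tr gs r) r = vadd (cd_mul mu gs r r) (cd_mul mu gs (cd_conj gs r) r)"
    unfolding cd_tr_def by (rule mul_add_l[OF Q r conj_closed[OF Q r] r])
  show ?thesis unfolding cd_charpoly_eval_def pow2[OF Q r] e cd_norm_def
    using r by (intro C_eqI[where gs=gs]) (simp_all add: vC vnth len_mul[OF Q] len_conj[OF Q] len_C)
qed

lemma sphere_sq:
  assumes Q: "QQ gs" and l: "lam \<in> cd_carrier gs" and r: "r \<in> cd_carrier gs"
    and h: "cd_charpoly_eval mu gs lam r = cd_zero gs" and j: "j < cd_dim gs"
  shows "cd_mul mu gs r r ! j = (cd_tr gs lam ! 0) * r ! j - (if j = 0 then cd_norm mu gs lam ! 0 else 0)"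
proof -
  have t: "cd_mul mu gs (cd_tr gs lam) r = smul (cd_tr gs lam ! 0) r"
    by (subst tr_scal[OF Q l]) (rule mul_scal_l[OF Q r])
  have "cd_charpoly_eval mu gs lam r ! j = 0" using h j by (simp add: nth_zero)
  then have "cd_mul mu gs r r ! j - (cd_tr gs lam ! 0) * r ! j + (if j = 0 then cd_norm mu gs lam ! 0 else 0) = 0"
    unfolding cd_charpoly_eval_def pow2[OF Q r] t
    apply (subst (asm) norm_scal[OF Q l])
    using l r j by (simp add: vC vnth len_mul[OF Q] len_conj[OF Q] len_C)
  then show ?thesis by (simp add: algebra_simps eq_diff_eq)
qed


fun ab :: "'f::field \<Rightarrow> 'f \<Rightarrow> nat \<Rightarrow> 'f \<times> 'f" where
  "ab t m 0 = (1, 0)"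
| "ab t m (Suc k) = (- snd (ab t m k) * m, fst (ab t m k) + snd (ab t m k) * t)"

lemma pow_form:
  assumes Q: "QQ gs" and r: "r \<in> cd_carrier gs"
    and H: "\<And>j. j < cd_dim gs \<Longrightarrow> cd_mul mu gs r r ! j = t * r ! j - (if j = 0 then m else 0)"
  shows "cd_pow mu gs r k = vadd (cd_scal gs (fst (ab t m k))) (smul (snd (ab t m k)) r)"
proof (induction k)
  case 0
  show ?case by (intro C_eqI[where gs=gs]) (simp_all add: vnth len_C[OF r])
next
  case (Suc k)
  let ?a = "fst (ab t m k)" and ?b = "snd (ab t m k)"
  have "cd_pow mu gs r (Suc k) = cd_mul mu gs r (vadd (cd_scal gs ?a) (smul ?b r))" using Suc by simp
  also have "\<dots> = vadd (smul ?a r) (smul ?b (cd_mul mu gs r r))"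
    by (simp add: mul_add_r[OF Q r scal_C smul_C[OF r]] mul_scal_r[OF Q r] mul_smul_r[OF Q r r])
  also have "\<dots> = vadd (cd_scal gs (fst (ab t m (Suc k)))) (smul (snd (ab t m (Suc k))) r)"
    by (intro C_eqI[where gs=gs]) (auto simp: vnth len_C[OF r] len_mul[OF Q] H algebra_simps)
  finally show ?case .
qed

definition vsumL :: "'f::field list \<Rightarrow> 'f list list \<Rightarrow> 'f list" where
  "vsumL gs vs = foldr vadd vs (cd_zero gs)"

lemma vsum_len: "(\<forall>v\<in>set vs. length v = cd_dim gs) \<Longrightarrow> length (vsumL gs vs) = cd_dim gs"
  by (induction vs) (simp_all add: vsumL_def len_zero len_vadd)

lemma nth_vsum_map:
  "(\<forall>k\<in>set ks. length (g k) = cd_dim gs) \<Longrightarrow> j < cd_dim gs \<Longrightarrow> vsumL gs (map g ks) ! j = (\<Sum>k\<leftarrow>ks. g k ! j)"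
proof (induction ks)
  case Nil then show ?case by (simp add: vsumL_def nth_zero)
next
  case (Cons a ks)
  have l: "length (vsumL gs (map g ks)) = cd_dim gs" using Cons.prems by (intro vsum_len) auto
  have "vsumL gs (map g (a # ks)) = vadd (g a) (vsumL gs (map g ks))" by (simp add: vsumL_def)
  then show ?case using Cons l by (simp add: nth_vadd)
qed

lemma mul_vsum_l:
  assumes Q: "QQ gs" and vs: "\<forall>v\<in>set vs. v \<in> cd_carrier gs" and r: "r \<in> cd_carrier gs"
  shows "cd_mul mu gs (vsumL gs vs) r = vsumL gs (map (\<lambda>v. cd_mul mu gs v r) vs)"
  using vs
proof (induction vs)
  case Nil then show ?case by (simp add: vsumL_def mul_zero_l[OF Q r])
next
  case (Cons a vs)
  have c: "vsumL gs vs \<in> cd_carrier gs" using Cons.prems vsum_len[of vs gs] by (simp add: cd_carrier_def)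
  have "vsumL gs (a # vs) = vadd a (vsumL gs vs)" by (simp add: vsumL_def)
  then show ?case using Cons mul_add_l[OF Q _ c r, of a mu] by (simp add: vsumL_def)
qed

lemma sum_list_upt_sum: "(\<Sum>k\<leftarrow>[0..<n]. f k) = (\<Sum>k<n. f k)"
  by (simp add: sum_set_upt_conv_sum_list_nat[symmetric] atLeast0LessThan)

lemma eval_form:
  assumes Q: "QQ gs" and fsC: "\<forall>a\<in>set fs. a \<in> cd_carrier gs" and r: "r \<in> cd_carrier gs"
    and H: "\<And>j. j < cd_dim gs \<Longrightarrow> cd_mul mu gs r r ! j = t * r ! j - (if j = 0 then m else 0)"
  shows "cd_eval mu gs fs r = vadd (vsumL gs (map (\<lambda>k. smul (fst (ab t m k)) (fs ! k)) [0..<length fs]))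
           (cd_mul mu gs (vsumL gs (map (\<lambda>k. smul (snd (ab t m k)) (fs ! k)) [0..<length fs])) r)"
proof -
  let ?N = "length fs"
  have fk: "\<And>k. k < ?N \<Longrightarrow> fs ! k \<in> cd_carrier gs" using fsC by simp
  have each: "\<And>k. k < ?N \<Longrightarrow> cd_mul mu gs (fs ! k) (cd_pow mu gs r k)
      = vadd (smul (fst (ab t m k)) (fs ! k)) (smul (snd (ab t m k)) (cd_mul mu gs (fs ! k) r))"
    using fk by (simp add: pow_form[OF Q r H] mul_add_r[OF Q _ scal_C smul_C[OF r]] mul_scal_r[OF Q] mul_smul_r[OF Q _ r])
  have mulB: "cd_mul mu gs (vsumL gs (map (\<lambda>k. smul (snd (ab t m k)) (fs ! k)) [0..<?N])) r
     = vsumL gs (map (\<lambda>k. smul (snd (ab t m k)) (cd_mul mu gs (fs ! k) r)) [0..<?N])"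
  proof -
    have "cd_mul mu gs (vsumL gs (map (\<lambda>k. smul (snd (ab t m k)) (fs ! k)) [0..<?N])) r
       = vsumL gs (map (\<lambda>v. cd_mul mu gs v r) (map (\<lambda>k. smul (snd (ab t m k)) (fs ! k)) [0..<?N]))"
      using fk by (intro mul_vsum_l[OF Q _ r]) (auto simp: smul_C)
    also have "\<dots> = vsumL gs (map (\<lambda>k. smul (snd (ab t m k)) (cd_mul mu gs (fs ! k) r)) [0..<?N])"
      unfolding map_map by (intro arg_cong[where f="vsumL gs"] map_cong refl) (simp add: mul_smul_l[OF Q fk r])
    finally show ?thesis .
  qed
  have lfk: "\<And>k. k < ?N \<Longrightarrow> length (fs ! k) = cd_dim gs" using fk len_C by blast
  have lfkr: "\<And>k. k < ?N \<Longrightarrow> length (cd_mul mu gs (fs ! k) r) = cd_dim gs"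
    using lfk len_C[OF r] len_mul[OF Q] by blast
  have lpk: "\<And>k. k < ?N \<Longrightarrow> length (cd_mul mu gs (fs ! k) (cd_pow mu gs r k)) = cd_dim gs"
    using each lfk lfkr by (simp add: len_vadd len_smul)
  show ?thesis
  proof (rule C_eqI[where gs=gs])
    show "length (cd_eval mu gs fs r) = cd_dim gs"
      unfolding cd_eval_def vsumL_def[symmetric] using lpk by (intro vsum_len) auto
    show "length (vadd (vsumL gs (map (\<lambda>k. smul (fst (ab t m k)) (fs ! k)) [0..<length fs]))
           (cd_mul mu gs (vsumL gs (map (\<lambda>k. smul (snd (ab t m k)) (fs ! k)) [0..<length fs])) r)) = cd_dim gs"
      unfolding mulB using lfk lfkr by (simp add: len_vadd len_smul vsum_len)
    fix j assume j: "j < cd_dim gs"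
    have "cd_eval mu gs fs r ! j = (\<Sum>k\<leftarrow>[0..<?N]. cd_mul mu gs (fs ! k) (cd_pow mu gs r k) ! j)"
      unfolding cd_eval_def vsumL_def[symmetric] using lpk j by (intro nth_vsum_map) auto
    also have "\<dots> = (\<Sum>k<?N. cd_mul mu gs (fs ! k) (cd_pow mu gs r k) ! j)" by (rule sum_list_upt_sum)
    also have "\<dots> = (\<Sum>k<?N. fst (ab t m k) * (fs ! k ! j) + snd (ab t m k) * (cd_mul mu gs (fs ! k) r ! j))"
      using j lfk lfkr by (intro sum.cong) (simp_all add: each nth_vadd nth_smul len_smul)
    also have "\<dots> = (\<Sum>k<?N. fst (ab t m k) * (fs ! k ! j)) + (\<Sum>k<?N. snd (ab t m k) * (cd_mul mu gs (fs ! k) r ! j))"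
      by (rule sum.distrib)
    also have "\<dots> = vadd (vsumL gs (map (\<lambda>k. smul (fst (ab t m k)) (fs ! k)) [0..<length fs]))
           (cd_mul mu gs (vsumL gs (map (\<lambda>k. smul (snd (ab t m k)) (fs ! k)) [0..<length fs])) r) ! j"
      unfolding mulB using j lfk lfkr
      by (simp add: nth_vadd len_smul vsum_len nth_vsum_map nth_smul sum_list_upt_sum)
    finally show "cd_eval mu gs fs r ! j = vadd (vsumL gs (map (\<lambda>k. smul (fst (ab t m k)) (fs ! k)) [0..<length fs]))
           (cd_mul mu gs (vsumL gs (map (\<lambda>k. smul (snd (ab t m k)) (fs ! k)) [0..<length fs])) r) ! j" .
  qed
qed


lemma zd:
  assumes Q: "QQ gs" and dv: "cd_division mu gs" and x: "x \<in> cd_carrier gs" and y: "y \<in> cd_carrier gs"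
    and xy: "cd_mul mu gs x y = cd_zero gs" and yn: "y \<noteq> cd_zero gs"
  shows "x = cd_zero gs"
proof -
  let ?n = "cd_norm mu gs y ! 0"
  have n: "?n \<noteq> 0"
  proof
    assume n0: "?n = 0"
    have "cd_norm mu gs y = cd_scal gs ?n" by (rule norm_scal[OF Q y])
    then have "cd_norm mu gs y = cd_zero gs" using n0 by (simp add: cd_zero_def)
    then have "y = cd_zero gs" using dv y unfolding cd_division_def by blast
    then show False using yn by simp
  qed
  have sx: "smul ?n x = cd_zero gs"
    using mul_conj_right[OF Q x y, of mu] xy mul_zero_l[OF Q conj_closed[OF Q y]] by simp
  show ?thesis
  proof (rule C_eqI[where gs=gs])
    fix j assume j: "j < cd_dim gs"
    have "smul ?n x ! j = 0" using sx j by (simp add: nth_zero)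
    then have "?n * x ! j = 0" using j len_C[OF x] by (simp add: nth_smul)
    then show "x ! j = cd_zero gs ! j" using n j by (simp add: nth_zero)
  qed (simp_all add: len_C[OF x] len_zero)
qed

lemma root_sums:
  assumes Q: "QQ gs" and po: "cd_params_ok mu gs" and dv: "cd_division mu gs"
    and fsC: "\<forall>a\<in>set fs. a \<in> cd_carrier gs" and sph: "cd_spherical_root mu gs fs lam"
    and j: "j < cd_dim gs"
  shows "(\<Sum>k<length fs. fst (ab (cd_tr gs lam ! 0) (cd_norm mu gs lam ! 0) k) * (fs ! k ! j)) = 0
       \<and> (\<Sum>k<length fs. snd (ab (cd_tr gs lam ! 0) (cd_norm mu gs lam ! 0) k) * (fs ! k ! j)) = 0"
proof -
  let ?t = "cd_tr gs lam ! 0" and ?m = "cd_norm mu gs lam ! 0"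
  have l: "lam \<in> cd_carrier gs" and nf: "\<not> cd_in_F gs lam" and e0: "cd_eval mu gs fs lam = cd_zero gs"
    and sp: "\<forall>r\<in>cd_carrier gs. cd_charpoly_eval mu gs lam r = cd_zero gs \<longrightarrow> cd_eval mu gs fs r = cd_zero gs"
    using sph unfolding cd_spherical_root_def by auto
  obtain r where r: "r \<in> cd_carrier gs" "r \<noteq> lam" "cd_tr gs r = cd_tr gs lam" "cd_norm mu gs r = cd_norm mu gs lam"
    using exists_other[OF Q po dv l nf] by blast
  have cl: "cd_charpoly_eval mu gs lam lam = cd_zero gs" by (rule quad_id[OF Q l])
  have cr: "cd_charpoly_eval mu gs lam r = cd_zero gs"
    using quad_id[OF Q r(1), of mu] r(3,4) by (simp add: cd_charpoly_eval_def)
  have er: "cd_eval mu gs fs r = cd_zero gs" using sp r(1) cr by blast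
  note Hl = sphere_sq[OF Q l l cl] and Hr = sphere_sq[OF Q l r(1) cr]
  define A where "A = vsumL gs (map (\<lambda>k. smul (fst (ab ?t ?m k)) (fs ! k)) [0..<length fs])"
  define B where "B = vsumL gs (map (\<lambda>k. smul (snd (ab ?t ?m k)) (fs ! k)) [0..<length fs])"
  have fk: "\<And>k. k < length fs \<Longrightarrow> fs ! k \<in> cd_carrier gs" using fsC by simp
  have lfk: "\<And>k. k < length fs \<Longrightarrow> length (fs ! k) = cd_dim gs" using fk len_C by blast
  have AC: "A \<in> cd_carrier gs" unfolding A_def cd_carrier_def using lfk by (simp add: vsum_len len_smul)
  have BC: "B \<in> cd_carrier gs" unfolding B_def cd_carrier_def using lfk by (simp add: vsum_len len_smul)
  have eAl: "vadd A (cd_mul mu gs B lam) = cd_zero gs"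
    using eval_form[OF Q fsC l Hl] e0 unfolding A_def B_def by simp
  have eAr: "vadd A (cd_mul mu gs B r) = cd_zero gs"
    using eval_form[OF Q fsC r(1) Hr] er unfolding A_def B_def by simp
  define w where "w = vadd lam (smul (-1) r)"
  have wC: "w \<in> cd_carrier gs" unfolding w_def by (simp add: vadd_C smul_C l r(1))
  have wn: "w \<noteq> cd_zero gs"
  proof
    assume w0: "w = cd_zero gs"
    have "lam = r"
    proof (rule C_eqI[where gs=gs])
      fix i assume i: "i < cd_dim gs"
      have "w ! i = 0" using w0 i by (simp add: nth_zero)
      then show "lam ! i = r ! i" unfolding w_def using i len_C[OF l] len_C[OF r(1)]
        by (simp add: nth_vadd nth_smul len_smul)
    qed (simp_all add: len_C[OF l] len_C[OF r(1)])
    then show False using r(2) by simp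
  qed
  have Bw: "cd_mul mu gs B w = cd_zero gs"
  proof -
    have "cd_mul mu gs B w = vadd (cd_mul mu gs B lam) (smul (-1) (cd_mul mu gs B r))"
      unfolding w_def by (simp add: mul_add_r[OF Q BC l smul_C[OF r(1)]] mul_smul_r[OF Q BC r(1)])
    also have "\<dots> = cd_zero gs"
    proof (rule C_eqI[where gs=gs])
      fix i assume i: "i < cd_dim gs"
      have a1: "A ! i + cd_mul mu gs B lam ! i = 0" using eAl i len_C[OF AC] len_mul[OF Q len_C[OF BC] len_C[OF l]]
        by (metis nth_vadd nth_zero)
      have a2: "A ! i + cd_mul mu gs B r ! i = 0" using eAr i len_C[OF AC] len_mul[OF Q len_C[OF BC] len_C[OF r(1)]]
        by (metis nth_vadd nth_zero)
      have "cd_mul mu gs B lam ! i = cd_mul mu gs B r ! i" using a1 a2 by (simp add: add_eq_0_iff2)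
      then show "vadd (cd_mul mu gs B lam) (smul (-1) (cd_mul mu gs B r)) ! i = cd_zero gs ! i"
        using i len_mul[OF Q len_C[OF BC] len_C[OF l]] len_mul[OF Q len_C[OF BC] len_C[OF r(1)]]
        by (simp add: nth_vadd nth_smul len_smul nth_zero)
    qed (simp_all add: len_vadd len_smul len_mul[OF Q len_C[OF BC] len_C[OF l]] len_mul[OF Q len_C[OF BC] len_C[OF r(1)]] len_zero)
    finally show ?thesis .
  qed
  have B0: "B = cd_zero gs" by (rule zd[OF Q dv BC wC Bw wn])
  have A0: "A = cd_zero gs"
  proof (rule C_eqI[where gs=gs])
    fix i assume i: "i < cd_dim gs"
    have "cd_mul mu gs B lam = cd_zero gs" unfolding B0 by (rule mul_zero_l[OF Q l])
    then have "A ! i + 0 = 0" using eAl i len_C[OF AC] len_zero[of gs] by (metis nth_vadd nth_zero)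
    then show "A ! i = cd_zero gs ! i" using i by (simp add: nth_zero)
  qed (simp_all add: len_C[OF AC] len_zero)
  have "A ! j = (\<Sum>k<length fs. fst (ab ?t ?m k) * (fs ! k ! j))"
    unfolding A_def using j lfk by (simp add: nth_vsum_map len_smul nth_smul sum_list_upt_sum)
  moreover have "B ! j = (\<Sum>k<length fs. snd (ab ?t ?m k) * (fs ! k ! j))"
    unfolding B_def using j lfk by (simp add: nth_vsum_map len_smul nth_smul sum_list_upt_sum)
  ultimately show ?thesis using A0 B0 j by (simp add: nth_zero)
qed

lemma no_root:
  assumes Q: "QQ gs" and dv: "cd_division mu gs" and l: "lam \<in> cd_carrier gs" and nf: "\<not> cd_in_F gs lam"
    and H: "\<And>j. j < cd_dim gs \<Longrightarrow> cd_mul mu gs lam lam ! j = t * lam ! j - (if j = 0 then m else 0)"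
  shows "m - t * a + a * a \<noteq> 0"
proof
  assume pa: "m - t * a + a * a = 0"
  define u where "u = vadd lam (cd_scal gs (- a))"
  define v where "v = vadd lam (cd_scal gs (a - t))"
  have uC: "u \<in> cd_carrier gs" unfolding u_def by (simp add: vadd_C scal_C l)
  have vC: "v \<in> cd_carrier gs" unfolding v_def by (simp add: vadd_C scal_C l)
  have "cd_mul mu gs u v = vadd (vadd (cd_mul mu gs lam lam) (smul (a - t) lam)) (smul (- a) v)"
    unfolding u_def using mul_add_l[OF Q l scal_C[of gs "-a"] vC, of mu] mul_scal_l[OF Q vC]
      mul_add_r[OF Q l l scal_C, of mu] mul_scal_r[OF Q l] by (simp add: v_def)
  also have "\<dots> = cd_zero gs"
  proof (rule C_eqI[where gs=gs])
    fix i assume i: "i < cd_dim gs"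
    have ll: "length (cd_mul mu gs lam lam) = cd_dim gs" using len_mul[OF Q len_C[OF l] len_C[OF l]] .
    have "vadd (vadd (cd_mul mu gs lam lam) (smul (a - t) lam)) (smul (- a) v) ! i
        = cd_mul mu gs lam lam ! i + (a - t) * lam ! i + (- a) * (lam ! i + (if i = 0 then a - t else 0))"
      unfolding v_def using i len_C[OF l] ll by (simp add: nth_vadd nth_smul len_smul len_vadd len_scal nth_scal)
    also have "\<dots> = (if i = 0 then - (m - t * a + a * a) else 0)"
      unfolding H[OF i] by (cases "i = 0") (simp_all add: algebra_simps)
    finally show "vadd (vadd (cd_mul mu gs lam lam) (smul (a - t) lam)) (smul (- a) v) ! i = cd_zero gs ! i"
      using pa i by (simp add: nth_zero)
  qed (simp_all add: v_def len_vadd len_smul len_scal len_mul[OF Q len_C[OF l] len_C[OF l]] len_C[OF l] len_zero)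
  finally have uv: "cd_mul mu gs u v = cd_zero gs" .
  have vn: "v \<noteq> cd_zero gs"
  proof
    assume "v = cd_zero gs"
    have "lam = cd_scal gs (t - a)"
    proof (rule C_eqI[where gs=gs])
      fix i assume i: "i < cd_dim gs"
      have "v ! i = 0" using \<open>v = cd_zero gs\<close> i by (simp add: nth_zero)
      then show "lam ! i = cd_scal gs (t - a) ! i" unfolding v_def using i len_C[OF l]
        by (auto simp: nth_vadd nth_scal len_scal algebra_simps add_eq_0_iff2 split: if_splits)
    qed (simp_all add: len_C[OF l] len_scal)
    then show False using nf unfolding cd_in_F_def by blast
  qed
  have "u = cd_zero gs" by (rule zd[OF Q dv uC vC uv vn])
  have "lam = cd_scal gs a"
  proof (rule C_eqI[where gs=gs])
    fix i assume i: "i < cd_dim gs"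
    have "u ! i = 0" using \<open>u = cd_zero gs\<close> i by (simp add: nth_zero)
    then show "lam ! i = cd_scal gs a ! i" unfolding u_def using i len_C[OF l]
      by (auto simp: nth_vadd nth_scal len_scal algebra_simps add_eq_0_iff2 split: if_splits)
  qed (simp_all add: len_C[OF l] len_scal)
  then show False using nf unfolding cd_in_F_def by blast
qed


definition Pq :: "'f::field \<Rightarrow> 'f \<Rightarrow> 'f poly" where
  "Pq t m = [:m, - t, 1:]"

lemma Pq_nz: "Pq t m \<noteq> 0" by (simp add: Pq_def)
lemma Pq_deg: "degree (Pq t m) = 2" by (simp add: Pq_def)
lemma Pq_lead: "lead_coeff (Pq t m) = 1" by (simp add: Pq_def Pq_deg)
lemma Pq_poly: "poly (Pq t m) a = m - t * a + a * a" by (simp add: Pq_def algebra_simps)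

lemma P_dvd_pow: "Pq t m dvd (monom 1 k - [:fst (ab t m k), snd (ab t m k):])"
proof (induction k)
  case 0
  then show ?case by (simp add: monom_0)
next
  case (Suc k)
  let ?a = "fst (ab t m k)" and ?b = "snd (ab t m k)"
  have eq: "monom 1 (Suc k) - [:fst (ab t m (Suc k)), snd (ab t m (Suc k)):]
      = [:0, 1:] * (monom 1 k - [:?a, ?b:]) + smult ?b (Pq t m)"
    by (rule poly_eqI) (simp add: Pq_def coeff_monom_mult monom_Suc coeff_pCons algebra_simps split: nat.split)
  show ?case unfolding eq using Suc by (intro dvd_add dvd_mult dvd_smult) simp_all
qed

lemma P_dvd_sum:
  "Pq t m dvd ((\<Sum>k<N. monom (c k) k) - [:\<Sum>k<N. fst (ab t m k) * c k, \<Sum>k<N. snd (ab t m k) * c k:])"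
proof (induction N)
  case 0
  then show ?case by simp
next
  case (Suc N)
  let ?a = "fst (ab t m N)" and ?b = "snd (ab t m N)"
  have eq: "(\<Sum>k<Suc N. monom (c k) k) - [:\<Sum>k<Suc N. fst (ab t m k) * c k, \<Sum>k<Suc N. snd (ab t m k) * c k:]
     = ((\<Sum>k<N. monom (c k) k) - [:\<Sum>k<N. fst (ab t m k) * c k, \<Sum>k<N. snd (ab t m k) * c k:])
       + smult (c N) (monom 1 N - [:?a, ?b:])"
    by (rule poly_eqI) (simp add: coeff_pCons algebra_simps split: nat.split)
  show ?case unfolding eq using Suc by (intro dvd_add dvd_smult P_dvd_pow) simp_all
qed


definition bez :: "'a::comm_ring_1 \<Rightarrow> 'a \<Rightarrow> bool" where
  "bez a b = (\<exists>u v. u * a + v * b = 1)"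

lemma bez_one: "bez 1 y" unfolding bez_def by (rule exI[of _ 1], rule exI[of _ 0]) simp

lemma bez_mult_left:
  assumes "bez x1 y" "bez x2 y" shows "bez (x1 * x2) y"
proof -
  obtain u1 v1 where 1: "u1 * x1 + v1 * y = 1" using assms(1) unfolding bez_def by blast
  obtain u2 v2 where 2: "u2 * x2 + v2 * y = 1" using assms(2) unfolding bez_def by blast
  have "(u1 * x1 + v1 * y) * (u2 * x2 + v2 * y) = 1" using 1 2 by simp
  then have "(u1 * u2) * (x1 * x2) + (u1 * x1 * v2 + v1 * (u2 * x2 + v2 * y)) * y = 1"
    by (simp add: algebra_simps)
  then show ?thesis unfolding bez_def by blast
qed

lemma bez_prod: "finite A \<Longrightarrow> (\<And>i. i \<in> A \<Longrightarrow> bez (f i) y) \<Longrightarrow> bez (\<Prod>i\<in>A. f i) y"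
  by (induction A rule: finite_induct) (simp_all add: bez_one bez_mult_left)

lemma bez_dvd:
  assumes "bez a b" "a dvd c" "b dvd c" shows "a * b dvd c"
proof -
  obtain u v where uv: "u * a + v * b = 1" using assms(1) unfolding bez_def by blast
  obtain k where k: "c = b * k" using assms(3) by (elim dvdE)
  obtain l where l: "c = a * l" using assms(2) by (elim dvdE)
  have e1: "u * a * c = a * b * (u * k)" by (subst k) (simp add: algebra_simps)
  have e2: "v * b * c = a * b * (v * l)" by (subst l) (simp add: algebra_simps)
  have "c = (u * a + v * b) * c" using uv by simp
  also have "\<dots> = u * a * c + v * b * c" by (simp add: algebra_simps)
  also have "\<dots> = a * b * (u * k + v * l)" unfolding e1 e2 by (simp add: algebra_simps)
  finally show ?thesis by (rule dvdI)
qed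

lemma Pq_bez:
  fixes t1 m1 t2 m2 :: "'f::field"
  assumes nr1: "\<And>a. m1 - t1 * a + a * a \<noteq> 0"
    and ne: "t1 \<noteq> t2 \<or> m1 \<noteq> m2"
  shows "bez (Pq t1 m1) (Pq t2 m2)"
proof (cases "t1 = t2")
  case True
  then have mm: "m1 - m2 \<noteq> 0" using ne by simp
  have d: "Pq t1 m1 - Pq t2 m2 = [:m1 - m2:]" using True by (simp add: Pq_def)
  have "[:1 / (m1 - m2):] * Pq t1 m1 + [:- 1 / (m1 - m2):] * Pq t2 m2 = smult (1 / (m1 - m2)) (Pq t1 m1 - Pq t2 m2)"
    by (simp add: smult_diff_right)
  also have "\<dots> = 1" unfolding d using mm by (simp add: one_pCons)
  finally have "[:1 / (m1 - m2):] * Pq t1 m1 + [:- 1 / (m1 - m2):] * Pq t2 m2 = 1" .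
  then show ?thesis unfolding bez_def by blast
next
  case False
  define s where "s = t2 - t1"
  have s: "s \<noteq> 0" using False by (simp add: s_def)
  define a where "a = (m2 - m1) / s"
  define e where "e = m1 - t1 * a + a * a"
  have e: "e \<noteq> 0" using nr1[of a] by (simp add: e_def)
  define q where "q = [:a - t1, 1:]"
  define X where "X = [:- a, 1:]"
  have L: "Pq t1 m1 - Pq t2 m2 = smult s X"
    unfolding Pq_def X_def a_def using s by (simp add: s_def field_simps)
  have F: "Pq t1 m1 - q * X = [:e:]"
    unfolding Pq_def X_def q_def e_def by (simp add: algebra_simps)
  define u where "u = smult (1 / e) (1 - smult (1 / s) q)"
  define v where "v = smult (1 / e) (smult (1 / s) q)"
  have "u * Pq t1 m1 + v * Pq t2 m2 = smult (1 / e) (Pq t1 m1 - smult (1 / s) (q * (Pq t1 m1 - Pq t2 m2)))"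
    unfolding u_def v_def by (simp add: algebra_simps smult_diff_right smult_add_right)
  also have "\<dots> = smult (1 / e) (Pq t1 m1 - q * X)"
    unfolding L using s by simp
  also have "\<dots> = 1" unfolding F using e by (simp add: one_pCons)
  finally show ?thesis unfolding bez_def by blast
qed

lemma prod_Pq_dvd:
  fixes n :: nat
  assumes dv: "\<And>i. i < n \<Longrightarrow> Pq (t i) (m i) dvd h"
    and cp: "\<And>i j. i < n \<Longrightarrow> j < n \<Longrightarrow> i \<noteq> j \<Longrightarrow> bez (Pq (t i) (m i)) (Pq (t j) (m j))"
  shows "(\<Prod>i<n. Pq (t i) (m i)) dvd h"
  using dv cp
proof (induction n)
  case 0 then show ?case by simp
next
  case (Suc n)
  have IH: "(\<Prod>i<n. Pq (t i) (m i)) dvd h" using Suc by simp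
  have "bez (\<Prod>i<n. Pq (t i) (m i)) (Pq (t n) (m n))"
    using Suc.prems(2) by (intro bez_prod) auto
  then show ?case using IH Suc.prems(1)[of n] by (simp add: bez_dvd)
qed

lemma prod_Pq_deg: "degree (\<Prod>i<n. Pq (t i) (m i)) = 2 * n"
  by (subst degree_prod_sum_eq) (simp_all add: Pq_nz Pq_deg)

lemma prod_Pq_lead: "lead_coeff (\<Prod>i<n. Pq (t i) (m i)) = 1"
  by (simp add: lead_coeff_prod Pq_lead)

lemma dvd_deg_eq:
  fixes h q :: "'f::field poly"
  assumes d: "q dvd h" and dg: "degree h \<le> degree q" and lq: "lead_coeff q = 1"
  shows "h = smult (coeff h (degree q)) q"
proof -
  obtain e where e: "h = q * e" using d by (elim dvdE)
  have qnz: "q \<noteq> 0" using lq by auto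
  show ?thesis
  proof (cases "e = 0")
    case True then show ?thesis using e by simp
  next
    case False
    have "degree h = degree q + degree e" using e degree_mult_eq[OF qnz False] by simp
    then have "degree e = 0" using dg by simp
    then obtain c where c: "e = [:c:]" by (metis degree_eq_zeroE)
    have hc: "h = smult c q" using e c by simp
    have "coeff h (degree q) = c * lead_coeff q" using hc by simp
    then have "coeff h (degree q) = c" using lq by simp
    then show ?thesis using hc lq by simp
  qed
qed


theorem corollary3p20:
  fixes mu :: "'f::field" and gs :: "'f list" and fs :: "'f list list"
    and n :: nat and lams :: "nat \<Rightarrow> 'f list"
  assumes "length gs = 1 \<or> length gs = 2"
    and "cd_params_ok mu gs"
    and "cd_division mu gs"
    and "\<forall>a\<in>set fs. a \<in> cd_carrier gs"
    and "length fs = 2 * n + 1"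
    and "last fs \<noteq> cd_zero gs"
    and "\<forall>i<n. cd_spherical_root mu gs fs (lams i)"
    and "\<forall>i<n. \<forall>j<n. i \<noteq> j \<longrightarrow> \<not> cd_quad_equiv mu gs (lams i) (lams j)"
  shows "\<exists>c\<in>cd_carrier gs. \<exists>g :: 'f poly.
           \<forall>k. cd_pcoeff gs fs k = cd_mul mu gs c (cd_scal gs (coeff g k))"
proof -
  note Q = assms(1) and po = assms(2) and dv = assms(3) and fsC = assms(4) and len = assms(5)
    and sph = assms(7) and dist = assms(8)
  define t where "t i = cd_tr gs (lams i) ! 0" for i
  define m where "m i = cd_norm mu gs (lams i) ! 0" for i
  define h where "h j = (\<Sum>k<length fs. monom (fs ! k ! j) k)" for j
  define Qp where "Qp = (\<Prod>i<n. Pq (t i) (m i))"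
  have lC: "\<And>i. i < n \<Longrightarrow> lams i \<in> cd_carrier gs" using sph unfolding cd_spherical_root_def by blast
  have lnf: "\<And>i. i < n \<Longrightarrow> \<not> cd_in_F gs (lams i)" using sph unfolding cd_spherical_root_def by blast
  have dvd_i: "Pq (t i) (m i) dvd h j" if i: "i < n" and j: "j < cd_dim gs" for i j
  proof -
    have z: "(\<Sum>k<length fs. fst (ab (t i) (m i) k) * (fs ! k ! j)) = 0"
         "(\<Sum>k<length fs. snd (ab (t i) (m i) k) * (fs ! k ! j)) = 0"
      using root_sums[OF Q po dv fsC _ j, of "lams i"] sph i unfolding t_def m_def by auto
    have "Pq (t i) (m i) dvd (h j - [:0, 0:])"
      using P_dvd_sum[where t="t i" and m="m i" and N="length fs" and c="\<lambda>k. fs ! k ! j"] unfolding h_def z .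
    then show ?thesis by simp
  qed
  have nr: "\<And>a. m i - t i * a + a * a \<noteq> 0" if i: "i < n" for i
  proof -
    have H: "\<And>j. j < cd_dim gs \<Longrightarrow> cd_mul mu gs (lams i) (lams i) ! j = t i * lams i ! j - (if j = 0 then m i else 0)"
      unfolding t_def m_def by (rule sphere_sq[OF Q lC[OF i] lC[OF i] quad_id[OF Q lC[OF i]]])
    show "\<And>a. m i - t i * a + a * a \<noteq> 0" by (rule no_root[OF Q dv lC[OF i] lnf[OF i] H])
  qed
  have bz: "bez (Pq (t i) (m i)) (Pq (t j) (m j))" if i: "i < n" and j: "j < n" and ij: "i \<noteq> j" for i j
  proof -
    have ne: "t i \<noteq> t j \<or> m i \<noteq> m j"
    proof (rule ccontr)
      assume "\<not> (t i \<noteq> t j \<or> m i \<noteq> m j)"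
      then have "t i = t j" "m i = m j" by auto
      then have "cd_tr gs (lams i) = cd_tr gs (lams j)" "cd_norm mu gs (lams i) = cd_norm mu gs (lams j)"
        unfolding t_def m_def
        by (metis tr_scal[OF Q lC[OF i]] tr_scal[OF Q lC[OF j]], metis norm_scal[OF Q lC[OF i]] norm_scal[OF Q lC[OF j]])
      then show False using dist i j ij unfolding cd_quad_equiv_def by blast
    qed
    show ?thesis by (rule Pq_bez[OF nr[OF i] ne])
  qed
  have coeff_h: "coeff (h j) k = (if k < length fs then fs ! k ! j else 0)" for j k
    unfolding h_def by (simp add: coeff_sum)
  have degQ: "degree Qp = 2 * n" unfolding Qp_def by (rule prod_Pq_deg)
  have hQ: "h j = smult (coeff (h j) (2 * n)) Qp" if j: "j < cd_dim gs" for j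
  proof -
    have "Qp dvd h j" unfolding Qp_def by (rule prod_Pq_dvd) (simp_all add: dvd_i j bz)
    moreover have "degree (h j) \<le> degree Qp" unfolding degQ by (rule degree_le) (simp add: coeff_h len)
    moreover have "lead_coeff Qp = 1" unfolding Qp_def by (rule prod_Pq_lead)
    ultimately have "h j = smult (coeff (h j) (degree Qp)) Qp" by (rule dvd_deg_eq)
    then show ?thesis unfolding degQ .
  qed
  define c where "c = fs ! (2 * n)"
  have cC: "c \<in> cd_carrier gs" unfolding c_def using fsC len by simp
  have "\<forall>k. cd_pcoeff gs fs k = cd_mul mu gs c (cd_scal gs (coeff Qp k))"
  proof
    fix k
    have r: "cd_mul mu gs c (cd_scal gs (coeff Qp k)) = smul (coeff Qp k) c" by (rule mul_scal_r[OF Q cC])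
    show "cd_pcoeff gs fs k = cd_mul mu gs c (cd_scal gs (coeff Qp k))"
    proof (cases "k < length fs")
      case True
      have kC: "fs ! k \<in> cd_carrier gs" using fsC True by simp
      show ?thesis unfolding r cd_pcoeff_def using True
      proof (simp, intro C_eqI[where gs=gs])
        fix j assume j: "j < cd_dim gs"
        have "fs ! k ! j = coeff (h j) k" using True by (simp add: coeff_h)
        also have "\<dots> = coeff (h j) (2 * n) * coeff Qp k" by (subst hQ[OF j]) simp
        also have "\<dots> = coeff Qp k * c ! j" using len by (simp add: coeff_h c_def)
        finally show "fs ! k ! j = smul (coeff Qp k) c ! j" using j len_C[OF cC] by (simp add: nth_smul)
      qed (simp_all add: len_C[OF kC] len_C[OF cC] len_smul)
    next
      case False
      then have "coeff Qp k = 0" using degQ len by (intro coeff_eq_0) simp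
      then show ?thesis unfolding r cd_pcoeff_def using False
        by (intro C_eqI[where gs=gs]) (simp_all add: len_C[OF cC] len_smul len_zero nth_smul nth_zero)
    qed
  qed
  then show ?thesis using cC by blast
qed


end
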